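(* If $q$ is a well-formed PIFO tree, then $\mathsf{flush}(q)$ is an interleaving of the lists in $\mathsf{snap}(q)$.
   Context: Fix a set $\mathsf{Pkt}$ of packets and a totally ordered set $\mathsf{Rk}$ of ranks (smaller is more favorable). PIFOs: for a set $S$, a PIFO over $S$ is a finite sequence of pairs $(s,r)\in S\times\mathsf{Rk}$ in insertion order; $\mathsf{PIFO}(S)$ is the set of these. $\mathsf{pop}_{\mathsf{PIFO}}(p)$ is undefined if $p$ is empty; otherwise it removes the entry of minimal rank (earliest-inserted among ties) and returns $(s,p')$, its element and the rest. $|p|$ is the number of entries, $|p|_s$ the number with element $s$. Topologies: $\mathsf{Topo}$ is the smallest set with $*\in\mathsf{Topo}$ and $\mathsf{Node}(\vec t)\in\mathsf{Topo}$ for $n\in\mathbb{N}$, $\vec t\in\mathsf{Topo}^n$. PIFO trees: $\mathsf{Leaf}(p)\in\mathsf{PIFOTree}( * )$ for $p\in\mathsf{PIFO}(\mathsf{Pkt})$; $\mathsf{Internal}(\vec q,p)\in\mathsf{PIFOTree}(\mathsf{Node}(\vec t))$ whenever $\vec t\in\mathsf{Topo}^n$, $p\in\mathsf{PIFO}(\{1,\dots,n\})$, $\vec q[i]\in\mathsf{PIFOTree}(\vec t[i])$. $\vec q[q'/i]$ replaces the $i$-th entry by $q'$. pop (partial): $\mathsf{pop}(\mathsf{Leaf}(p))=(pkt,\mathsf{Leaf}(p'))$ if $\mathsf{pop}_{\mathsf{PIFO}}(p)=(pkt,p')$; $\mathsf{pop}(\mathsf{Internal}(\vec q,p))=(pkt,\mathsf{Internal}(\vec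 q[q'/i],p'))$ if $\mathsf{pop}_{\mathsf{PIFO}}(p)=(i,p')$ and $\mathsf{pop}(\vec q[i])=(pkt,q')$; undefined otherwise. Size: $|\mathsf{Leaf}(p)|=|p|$, $|\mathsf{Internal}(\vec q,p)|=\sum_i|\vec q[i]|$. Well-formedness: $\vdash\mathsf{Leaf}(p)$ always; $\vdash\mathsf{Internal}(\vec q,p)$ iff for all $i$, $\vdash\vec q[i]$ and $|p|_i=|\vec q[i]|$. Words: finite sequences are written by juxtaposition, $\epsilon$ is the empty word, $\cdot$ concatenation. For a PIFO $p$, $\textsc{flush}(p)$ is the word of elements obtained by repeatedly applying $\mathsf{pop}_{\mathsf{PIFO}}$ until $p$ is empty, with the last popped element leftmost. Snapshot (a list of words): $\mathsf{snap}(\mathsf{Leaf}(p)) = [\textsc{flush}(p)]$ and $\mathsf{snap}(\mathsf{Internal}(\vec q,p)) = \mathsf{snap}(\vec q[1]) +\!\!+ \cdots +\!\!+ \mathsf{snap}(\vec q[n])$, where $[x]$ is the one-element list and $+\!\!+$ list concatenation. For a well-formed $q$, $\mathsf{flush}(q)$ is defined by induction on $|q|$: $\mathsf{flush}(q)=\epsilon$ if $|q|=0$, and $\mathsf{flush}(q)=\mathsf{flush}(q')\cdot pkt$ if $|q|>0$ and $\mathsf{pop}(q)=(pkt,q')$. A word $w$ is an interleaving of words $w_1,\dots,w_k$ if the positions of $w$ can be partitioned into $k$ sets such that, for each $j$, the letters of $w$ at the $j$-th set, read in order, form $w_j$. *)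

theory Defs
  imports Main
begin

text \<open>A PIFO over elements of type 's with ranks of type 'r is a list of
(element, rank) pairs in insertion order (head = earliest inserted).\<close>
type_synonym ('s, 'r) pifo = "('s \<times> 'r) list"

definition pop_index :: "('s, 'r::linorder) pifo \<Rightarrow> nat" where
  "pop_index p = (LEAST k. k < length p \<and> (\<forall>j<length p. snd (p ! k) \<le> snd (p ! j)))"

definition pop_pifo :: "('s, 'r::linorder) pifo \<Rightarrow> ('s \<times> ('s, 'r) pifo) option" where
  "pop_pifo p = (if p = [] then None
     else Some (fst (p ! pop_index p), take (pop_index p) p @ drop (Suc (pop_index p)) p))"

lemma pop_pifo_length:
  "pop_pifo p = Some (s, p') \<Longrightarrow> length p' < length p"
proof -
  assume a: "pop_pifo p = Some (s, p')"
  hence ne: "p \<noteq> []" by (auto simp: pop_pifo_def split: if_splits)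
  have "\<exists>k. k < length p \<and> (\<forall>j<length p. snd (p ! k) \<le> snd (p ! j))"
  proof -
    have fin: "finite (snd ` set p)" "snd ` set p \<noteq> {}" using ne by auto
    obtain x where x: "x \<in> set p" "snd x = Min (snd ` set p)"
      using Min_in[OF fin] by auto
    then obtain k where k: "k < length p" "p ! k = x" by (auto simp: in_set_conv_nth)
    have "\<forall>j<length p. snd (p ! k) \<le> snd (p ! j)"
      using k x fin by auto
    thus ?thesis using k by blast
  qed
  hence "pop_index p < length p" unfolding pop_index_def by (rule LeastI2_ex) auto
  thus ?thesis using a ne by (auto simp: pop_pifo_def)
qed

definition count_pifo :: "('s, 'r) pifo \<Rightarrow> 's \<Rightarrow> nat" where
  "count_pifo p s = length (filter (\<lambda>e. fst e = s) p)"

function flush_pifo :: "('s, 'r::linorder) pifo \<Rightarrow> 's list" where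
  "flush_pifo p = (case pop_pifo p of None \<Rightarrow> []
                    | Some (s, p') \<Rightarrow> flush_pifo p' @ [s])"
  by pat_completeness auto
termination
  by (relation "measure length") (auto dest: pop_pifo_length)

datatype topo = Star | Node "topo list"

text \<open>Untyped PIFO trees; the internal PIFO stores child indices 1..n.\<close>
datatype ('p, 'r) ptree =
    Leaf "('p, 'r) pifo"
  | Internal "('p, 'r) ptree list" "(nat, 'r) pifo"

fun has_topo :: "('p, 'r) ptree \<Rightarrow> topo \<Rightarrow> bool" where
  "has_topo (Leaf p) Star = True"
| "has_topo (Internal qs p) (Node ts) =
     (list_all2 has_topo qs ts
      \<and> (\<forall>e\<in>set p. 1 \<le> fst e \<and> fst e \<le> length ts))"
| "has_topo _ _ = False"

fun tsize :: "('p, 'r) ptree \<Rightarrow> nat" where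
  "tsize (Leaf p) = length p"
| "tsize (Internal qs p) = sum_list (map tsize qs)"

text \<open>Well-formedness (children indexed from 1; qs ! (i-1) is the i-th child).\<close>
fun wf_tree :: "('p, 'r) ptree \<Rightarrow> bool" where
  "wf_tree (Leaf p) = True"
| "wf_tree (Internal qs p) =
     ((\<forall>q\<in>set qs. wf_tree q) \<and>
      (\<forall>i<length qs. count_pifo p (Suc i) = tsize (qs ! i)))"

function tpop :: "('p, 'r::linorder) ptree \<Rightarrow> ('p \<times> ('p, 'r) ptree) option" where
  "tpop (Leaf p) = (case pop_pifo p of None \<Rightarrow> None
                     | Some (pkt, p') \<Rightarrow> Some (pkt, Leaf p'))"
| "tpop (Internal qs p) = (case pop_pifo p of None \<Rightarrow> None
     | Some (i, p') \<Rightarrow>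
         if 1 \<le> i \<and> i \<le> length qs then
           (case tpop (qs ! (i - 1)) of None \<Rightarrow> None
            | Some (pkt, q') \<Rightarrow> Some (pkt, Internal (qs[i - 1 := q']) p'))
         else None)"
  by pat_completeness auto
termination
proof (relation "measure size", goal_cases)
  case 1 show ?case by simp
next
  case (2 qs p x2 i p')
  hence "qs ! (i - 1) \<in> set qs" by (auto intro: nth_mem)
  hence "size (qs ! (i - 1)) \<le> size_list size qs" by (rule size_list_estimation') simp
  thus ?case by simp
qed

fun snap :: "('p, 'r::linorder) ptree \<Rightarrow> 'p list list" where
  "snap (Leaf p) = [flush_pifo p]"
| "snap (Internal qs p) = concat (map snap qs)"

text \<open>Realised with the size as fuel; on
  well-formed trees this agrees with the paper's (partial) definition.\<close>
fun flush_aux :: "nat \<Rightarrow> ('p, 'r::linorder) ptree \<Rightarrow> 'p list" where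
  "flush_aux 0 q = []"
| "flush_aux (Suc n) q = (case tpop q of None \<Rightarrow> []
                           | Some (pkt, q') \<Rightarrow> flush_aux n q' @ [pkt])"

definition tflush :: "('p, 'r::linorder) ptree \<Rightarrow> 'p list" where
  "tflush q = flush_aux (tsize q) q"

definition interleaving :: "'a list \<Rightarrow> 'a list list \<Rightarrow> bool" where
  "interleaving w ws \<longleftrightarrow>
     (\<exists>f :: nat \<Rightarrow> nat. (\<forall>i<length w. f i < length ws) \<and>
        (\<forall>j<length ws. nths w {i. i < length w \<and> f i = j} = ws ! j))"

end

theory Submission
  imports Defs
begin

lemma pop_index_lt: "p \<noteq> [] \<Longrightarrow> pop_index p < length p"
proof -
  assume ne: "p \<noteq> []"
  have "\<exists>k. k < length p \<and> (\<forall>j<length p. snd (p ! k) \<le> snd (p ! j))"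
  proof -
    have fin: "finite (snd ` set p)" "snd ` set p \<noteq> {}" using ne by auto
    obtain x where x: "x \<in> set p" "snd x = Min (snd ` set p)"
      using Min_in[OF fin] by auto
    then obtain k where k: "k < length p" "p ! k = x" by (auto simp: in_set_conv_nth)
    have "\<forall>j<length p. snd (p ! k) \<le> snd (p ! j)"
      using k x fin by auto
    thus ?thesis using k by blast
  qed
  thus "pop_index p < length p" unfolding pop_index_def by (rule LeastI2_ex) auto
qed

lemma pop_pifo_facts:
  assumes "p \<noteq> []"
  shows "\<exists>k. k < length p \<and> pop_pifo p = Some (fst (p ! k), take k p @ drop (Suc k) p)"
  using pop_index_lt[OF assms] assms unfolding pop_pifo_def by auto

lemma count_split: "count_pifo (xs @ e # ys) s = count_pifo (xs @ ys) s + (if fst e = s then 1 else 0)"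
  by (simp add: count_pifo_def)

fun inv :: "('p, 'r) ptree \<Rightarrow> bool" where
  "inv (Leaf p) = True"
| "inv (Internal qs p) =
     ((\<forall>q\<in>set qs. inv q) \<and>
      (\<forall>i<length qs. count_pifo p (Suc i) = tsize (qs ! i)) \<and>
      (\<forall>e\<in>set p. 1 \<le> fst e \<and> fst e \<le> length qs))"

lemma topo_inv: "has_topo q t \<Longrightarrow> wf_tree q \<Longrightarrow> inv q"
proof (induction q t rule: has_topo.induct)
  case (2 qs p ts)
  have "\<forall>q\<in>set qs. inv q"
  proof
    fix q assume "q \<in> set qs"
    then obtain i where i: "i < length qs" "q = qs ! i" by (auto simp: in_set_conv_nth)
    have "has_topo (qs ! i) (ts ! i)" using 2(2) i by (auto simp: list_all2_conv_all_nth)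
    moreover have "ts ! i \<in> set ts" using 2(2) i
      by (auto simp: list_all2_conv_all_nth)
    moreover have "wf_tree (qs ! i)" using 2(3) i by auto
    ultimately show "inv q" using 2(1) i by (metis nth_mem)
  qed
  moreover have "length qs = length ts" using 2(2) by (auto dest: list_all2_lengthD)
  ultimately show ?case using 2(2,3) by auto
qed auto

lemma size0_snap: "tsize q = 0 \<Longrightarrow> w \<in> set (snap q) \<Longrightarrow> w = []"
proof (induction q arbitrary: w rule: tsize.induct)
  case (1 p)
  then show ?case by (simp add: pop_pifo_def)
next
  case (2 qs p)
  then show ?case by auto
qed


lemma tpop_step:
  "inv q \<Longrightarrow> 0 < tsize q \<Longrightarrow> \<exists>pkt q' j. tpop q = Some (pkt, q') \<and> inv q' \<and>
     tsize q = Suc (tsize q') \<and> j < length (snap q') \<and> snap q = (snap q')[j := snap q' ! j @ [pkt]]"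
proof (induction q rule: tsize.induct)
  case (1 p)
  then have ne: "p \<noteq> []" by auto
  obtain k where k: "k < length p" and pp: "pop_pifo p = Some (fst (p ! k), take k p @ drop (Suc k) p)"
    using pop_pifo_facts[OF ne] by blast
  define p' where "p' = take k p @ drop (Suc k) p"
  have fl: "flush_pifo p = flush_pifo p' @ [fst (p ! k)]"
    using pp p'_def by (subst flush_pifo.simps) simp
  have "length p = Suc (length p')" using k p'_def by simp
  then show ?case using pp fl p'_def
    by (intro exI[of _ "fst (p ! k)"] exI[of _ "Leaf p'"] exI[of _ 0]) simp
next
  case (2 qs p)
  have inv: "\<forall>q\<in>set qs. inv q" "\<forall>i<length qs. count_pifo p (Suc i) = tsize (qs ! i)"
    "\<forall>e\<in>set p. 1 \<le> fst e \<and> fst e \<le> length qs" using 2(2) by auto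
  have "\<exists>i<length qs. 0 < tsize (qs ! i)"
  proof (rule ccontr)
    assume "\<not> ?thesis"
    then have "\<forall>x\<in>set (map tsize qs). x = 0" by (auto simp: in_set_conv_nth)
    then have "sum_list (map tsize qs) = 0" by (simp add: sum_list_eq_0_iff)
    then show False using 2(3) by (metis tsize.simps(2) less_irrefl)
  qed
  then obtain i where "i < length qs" "0 < count_pifo p (Suc i)" using inv(2) by auto
  then have ne: "p \<noteq> []" by (auto simp: count_pifo_def)
  obtain k where k: "k < length p" and pp: "pop_pifo p = Some (fst (p ! k), take k p @ drop (Suc k) p)"
    using pop_pifo_facts[OF ne] by blast
  define p' where "p' = take k p @ drop (Suc k) p"
  define a where "a = fst (p ! k)"
  have psplit: "p = take k p @ p ! k # drop (Suc k) p" using k by (simp add: id_take_nth_drop)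
  have cnt: "count_pifo p x = count_pifo p' x + (if a = x then 1 else 0)" for x
    using count_split[of "take k p" "p ! k" "drop (Suc k) p" x] psplit p'_def a_def by simp
  have setp': "set p' \<subseteq> set p" unfolding p'_def
    using set_take_subset[of k p] set_drop_subset[of "Suc k" p] by auto
  have "p ! k \<in> set p" using k by simp
  then have a: "1 \<le> a" "a \<le> length qs" using inv(3) a_def by auto
  define m where "m = a - 1"
  have m: "m < length qs" "Suc m = a" using a m_def by auto
  have tm: "tsize (qs ! m) = Suc (count_pifo p' a)" using inv(2)[rule_format, of m] m cnt[of a] by simp
  have "qs ! m \<in> set qs" using m by simp
  then obtain pkt q'' j' where ih: "tpop (qs ! m) = Some (pkt, q'')" "inv q''"
     "tsize (qs ! m) = Suc (tsize q'')" "j' < length (snap q'')"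
     "snap (qs ! m) = (snap q'')[j' := snap q'' ! j' @ [pkt]]"
    using 2(1)[of "qs ! m"] inv(1) tm by auto
  define A where "A = take m qs"
  define B where "B = drop (Suc m) qs"
  have qsplit: "qs = A @ qs ! m # B" using m(1) by (simp add: A_def B_def id_take_nth_drop)
  have qupd: "qs[m := q''] = A @ q'' # B" using m(1) by (simp add: A_def B_def upd_conv_take_nth_drop)
  have lenA: "length A = m" using m A_def by simp
  have tp: "tpop (Internal qs p) = Some (pkt, Internal (qs[m := q'']) p')"
    using pp ih(1) a m p'_def a_def m_def by simp
  have invn: "inv (Internal (qs[m := q'']) p')"
  proof -
    have "\<forall>q\<in>set (qs[m := q'']). inv q"
      using inv(1) ih(2) set_update_subset_insert[of qs m q''] by auto
    moreover have "\<forall>i<length (qs[m := q'']). count_pifo p' (Suc i) = tsize (qs[m := q''] ! i)"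
    proof (intro allI impI)
      fix i assume "i < length (qs[m := q''])"
      then have i: "i < length qs" by simp
      show "count_pifo p' (Suc i) = tsize (qs[m := q''] ! i)"
      proof (cases "i = m")
        case True then show ?thesis using tm ih(3) m i by simp
      next
        case False then show ?thesis using inv(2) i cnt[of "Suc i"] m by auto
      qed
    qed
    moreover have "\<forall>e\<in>set p'. 1 \<le> fst e \<and> fst e \<le> length (qs[m := q''])"
      using inv(3) setp' by auto
    ultimately show ?thesis by simp
  qed
  have ts: "tsize (Internal qs p) = Suc (tsize (Internal (qs[m := q'']) p'))"
    apply (subst qsplit) apply (subst qupd) using ih(3) by simp
  define L where "L = concat (map snap A)"
  define R where "R = concat (map snap B)"
  have sn1: "snap (Internal qs p) = L @ snap (qs ! m) @ R"
    apply (subst qsplit) by (simp add: L_def R_def)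
  have sn2: "snap (Internal (qs[m := q'']) p') = L @ snap q'' @ R"
    apply (subst qupd) by (simp add: L_def R_def)
  have "snap (Internal qs p) = (L @ snap q'' @ R)[length L + j' := (L @ snap q'' @ R) ! (length L + j') @ [pkt]]"
    unfolding sn1 ih(5) using ih(4) by (simp add: list_update_append nth_append)
  then show ?case using tp invn ts sn2 ih(4)
    by (intro exI[of _ pkt] exI[of _ "Internal (qs[m := q'']) p'"] exI[of _ "length L + j'"]) simp
qed


lemma nths_cong: "(\<And>i. i < length xs \<Longrightarrow> i \<in> A \<longleftrightarrow> i \<in> B) \<Longrightarrow> nths xs A = nths xs B"
proof (induction xs arbitrary: A B)
  case Nil then show ?case by simp
next
  case (Cons x xs)
  have "nths xs {j. Suc j \<in> A} = nths xs {j. Suc j \<in> B}"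
    by (rule Cons.IH) (use Cons.prems in auto)
  moreover have "0 \<in> A \<longleftrightarrow> 0 \<in> B" using Cons.prems[of 0] by simp
  ultimately show ?case by (simp add: nths_Cons)
qed

lemma interleave_snoc:
  assumes "interleaving w ws" "j < length ws"
  shows "interleaving (w @ [x]) (ws[j := ws ! j @ [x]])"
proof -
  obtain f where f: "\<forall>i<length w. f i < length ws"
    "\<forall>k<length ws. nths w {i. i < length w \<and> f i = k} = ws ! k"
    using assms(1) unfolding interleaving_def by blast
  define g where "g = f(length w := j)"
  have "\<forall>i<length (w @ [x]). g i < length (ws[j := ws ! j @ [x]])"
    using f(1) assms(2) by (auto simp: g_def less_Suc_eq)
  moreover have "\<forall>k<length (ws[j := ws ! j @ [x]]).
      nths (w @ [x]) {i. i < length (w @ [x]) \<and> g i = k} = ws[j := ws ! j @ [x]] ! k"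
  proof (intro allI impI)
    fix k assume k: "k < length (ws[j := ws ! j @ [x]])"
    have "nths w {i. i < length (w @ [x]) \<and> g i = k} = nths w {i. i < length w \<and> f i = k}"
      by (rule nths_cong) (auto simp: g_def)
    then show "nths (w @ [x]) {i. i < length (w @ [x]) \<and> g i = k} = ws[j := ws ! j @ [x]] ! k"
      using f(2) k by (auto simp: nths_append g_def nth_list_update)
  qed
  ultimately show ?thesis unfolding interleaving_def by blast
qed

lemma tflush_step: "tpop q = Some (pkt, q') \<Longrightarrow> tsize q = Suc (tsize q') \<Longrightarrow>
  tflush q = tflush q' @ [pkt]"
  by (simp add: tflush_def)

lemma main: "inv q \<Longrightarrow> interleaving (tflush q) (snap q)"
proof (induction "tsize q" arbitrary: q)
  case 0
  then have "tflush q = []" by (simp add: tflush_def)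
  moreover have "\<forall>w\<in>set (snap q). w = []" using size0_snap 0(1) by metis
  ultimately show ?case unfolding interleaving_def
    by (intro exI[of _ "\<lambda>_. 0"]) (auto, metis nth_mem)
next
  case (Suc n)
  obtain pkt q' j where h: "tpop q = Some (pkt, q')" "inv q'"
     "tsize q = Suc (tsize q')" "j < length (snap q')" "snap q = (snap q')[j := snap q' ! j @ [pkt]]"
    using tpop_step[OF Suc(3)] Suc(2) by auto
  have "interleaving (tflush q') (snap q')" using Suc(1)[of q'] h Suc(2) by simp
  then show ?case using interleave_snoc h tflush_step by metis
qed

theorem lemma4p5:
  fixes q :: "('p, 'r::linorder) ptree" and t :: topo
  assumes "has_topo q t" and "wf_tree q"
  shows "interleaving (tflush q) (snap q)"
  using main topo_inv assms by blast

end
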